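(* Let $\mathbf{f}:\mathbb{R}^D\times[0,1]\to\mathbb{R}^D$ and $g:[0,1]\to\mathbb{R}$ be sufficiently regular. Let $q_t$ and $p_t$, $t\in[0,1]$, be positive smooth probability densities on $\mathbb{R}^D$, each solving the Fokker–Planck equation $$\partial_t u=\nabla\cdot\Big(\big(\tfrac12 g(t)^2\nabla\log u-\mathbf{f}(\cdot,t)\big)u\Big)$$ of the SDE $\mathrm{d}\mathbf{z}=\mathbf{f}(\mathbf{z},t)\mathrm{d}t+g(t)\mathrm{d}\mathbf{w}$. Assume enough decay and regularity that differentiation under the integral sign and integration by parts with vanishing boundary terms are valid; for instance, $\log q_t,\log p_t$ smooth with at most polynomial growth at infinity suffices. Assume $q_1=p_1$. Then $$-\int q_0\log p_0\,d\mathbf{z}=\mathcal{H}(q_1)+\int_0^1\mathbb{E}_{\mathbf{z}\sim q_t}\Big[\tfrac12 g(t)^2\|\nabla\log p_t(\mathbf{z})\|_2^2+\mathbf{f}(\mathbf{z},t)^\top\nabla\log q_t(\mathbf{z})-g(t)^2\,\nabla\log q_t(\mathbf{z})^\top\nabla\log p_t(\mathbf{z})\Big]dt,$$ where $\mathcal{H}(q_1)=-\int q_1\log q_1$ is the differential entropy. *)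

theory Defs
  imports "HOL-Analysis.Analysis"
begin

definition partial :: "('a::euclidean_space \<Rightarrow> real) \<Rightarrow> 'a \<Rightarrow> 'a \<Rightarrow> real" where
  "partial \<phi> i x = frechet_derivative \<phi> (at x) i"

definition grad :: "('a::euclidean_space \<Rightarrow> real) \<Rightarrow> 'a \<Rightarrow> 'a" where
  "grad \<phi> x = (\<Sum>i\<in>Basis. partial \<phi> i x *\<^sub>R i)"

definition divg :: "('a::euclidean_space \<Rightarrow> 'a) \<Rightarrow> 'a \<Rightarrow> real" where
  "divg V x = (\<Sum>i\<in>Basis. partial (\<lambda>y. V y \<bullet> i) i x)"

definition fp_flux :: "(real \<Rightarrow> real) \<Rightarrow> ('a::euclidean_space \<Rightarrow> real \<Rightarrow> 'a)
    \<Rightarrow> ('a \<Rightarrow> real \<Rightarrow> real) \<Rightarrow> 'a \<Rightarrow> real \<Rightarrow> 'a" where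
  "fp_flux g f u z t = u z t *\<^sub>R (((g t)^2 / 2) *\<^sub>R grad (\<lambda>y. ln (u y t)) z - f z t)"

definition diff_entropy :: "('a::euclidean_space \<Rightarrow> real) \<Rightarrow> real" where
  "diff_entropy \<phi> = - (\<integral>z. \<phi> z * ln (\<phi> z) \<partial>lborel)"

definition expect_dens :: "('a::euclidean_space \<Rightarrow> real) \<Rightarrow> ('a \<Rightarrow> real) \<Rightarrow> real" where
  "expect_dens \<phi> h = (\<integral>z. \<phi> z * h z \<partial>lborel)"

end

theory Submission
  imports Defs
begin


lemma partial_eq:
  assumes "(\<phi> has_derivative \<phi>') (at x)"
  shows "partial \<phi> i x = \<phi>' i"
  using assms by (simp add: partial_def frechet_derivative_at[symmetric])

lemma partial_works:
  assumes "\<phi> differentiable (at x)"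
  shows "(\<phi> has_derivative (\<lambda>h. frechet_derivative \<phi> (at x) h)) (at x)"
  using assms frechet_derivative_works by (metis eta_contract_eq)

lemma partial_mult:
  fixes \<phi> \<psi> :: "'a::euclidean_space \<Rightarrow> real"
  assumes "\<phi> differentiable (at x)" "\<psi> differentiable (at x)"
  shows "partial (\<lambda>z. \<phi> z * \<psi> z) i x = partial \<phi> i x * \<psi> x + \<phi> x * partial \<psi> i x"
proof -
  have "((\<lambda>z. \<phi> z * \<psi> z) has_derivative
     (\<lambda>h. \<phi> x * frechet_derivative \<psi> (at x) h + frechet_derivative \<phi> (at x) h * \<psi> x)) (at x)"
    using has_derivative_mult[OF partial_works[OF assms(1)] partial_works[OF assms(2)]] by simp
  from partial_eq[OF this] show ?thesis by (simp add: partial_def)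
qed

lemma partial_ln:
  fixes \<phi> :: "'a::euclidean_space \<Rightarrow> real"
  assumes "\<phi> differentiable (at x)" "\<phi> x > 0"
  shows "partial (\<lambda>z. ln (\<phi> z)) i x = partial \<phi> i x / \<phi> x"
proof -
  have "((\<lambda>z. ln (\<phi> z)) has_derivative (\<lambda>h. frechet_derivative \<phi> (at x) h * inverse (\<phi> x))) (at x)"
    using has_derivative_ln[OF assms(2) partial_works[OF assms(1)]] by simp
  from partial_eq[OF this] show ?thesis by (simp add: partial_def divide_inverse)
qed

lemma partial_div:
  fixes \<phi> \<psi> :: "'a::euclidean_space \<Rightarrow> real"
  assumes "\<phi> differentiable (at x)" "\<psi> differentiable (at x)" "\<psi> x \<noteq> 0"
  shows "partial (\<lambda>z. \<phi> z / \<psi> z) i x = (partial \<phi> i x * \<psi> x - \<phi> x * partial \<psi> i x) / (\<psi> x)^2"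
proof -
  have "((\<lambda>z. \<phi> z / \<psi> z) has_derivative
     (\<lambda>h. (frechet_derivative \<phi> (at x) h * \<psi> x - \<phi> x * frechet_derivative \<psi> (at x) h) / (\<psi> x * \<psi> x))) (at x)"
    using has_derivative_divide'[OF partial_works[OF assms(1)] partial_works[OF assms(2)] assms(3)] by simp
  from partial_eq[OF this] show ?thesis by (simp add: partial_def power2_eq_square)
qed

lemma grad_inner:
  fixes \<phi> :: "'a::euclidean_space \<Rightarrow> real"
  assumes "i \<in> Basis"
  shows "grad \<phi> x \<bullet> i = partial \<phi> i x"
  using assms by (simp add: grad_def inner_sum_left inner_Basis if_distrib cong: if_cong)

lemma integral_translate:
  fixes F :: "'a::euclidean_space \<Rightarrow> real"
  assumes "F \<in> borel_measurable borel"
  shows "(\<integral>z. F (z + c) \<partial>lborel) = (\<integral>z. F z \<partial>lborel)"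
    and "integrable lborel (\<lambda>z. F (z + c)) \<longleftrightarrow> integrable lborel F"
proof -
  have "(\<integral>z. F z \<partial>lborel) = (\<integral>z. F z \<partial>(distr lborel borel ((+) c)))"
    by (simp add: lborel_distr_plus)
  also have "\<dots> = (\<integral>z. F (c + z) \<partial>lborel)"
    using assms by (intro integral_distr) auto
  finally show "(\<integral>z. F (z + c) \<partial>lborel) = (\<integral>z. F z \<partial>lborel)" by (simp add: add.commute)
  have "integrable lborel F \<longleftrightarrow> integrable (distr lborel borel ((+) c)) F"
    by (simp add: lborel_distr_plus)
  also have "\<dots> \<longleftrightarrow> integrable lborel (\<lambda>z. F (c + z))"
    using assms by (intro integrable_distr_eq) auto
  finally show "integrable lborel (\<lambda>z. F (z + c)) \<longleftrightarrow> integrable lborel F" by (simp add: add.commute)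
qed



lemma ibp_zero:
  fixes F :: "'a::euclidean_space \<Rightarrow> real" and i :: 'a
  assumes dF: "\<And>x. F differentiable (at x)"
    and iF: "integrable lborel F" and idF: "integrable lborel (partial F i)"
  shows "(\<integral>z. partial F i z \<partial>lborel) = 0"
proof -
  define d where "d = partial F i"
  have d_meas[measurable]: "d \<in> borel_measurable borel"
    using borel_measurable_integrable[OF idF] by (simp add: d_def)
  have F_meas[measurable]: "F \<in> borel_measurable borel"
    using borel_measurable_integrable[OF iF] by simp
  have deriv: "((\<lambda>s. F (z + s *\<^sub>R i)) has_real_derivative d (z + s *\<^sub>R i)) (at s)" for z s
  proof -
    let ?x = "z + s *\<^sub>R i"
    have 1: "((\<lambda>s. z + s *\<^sub>R i) has_derivative (\<lambda>h. h *\<^sub>R i)) (at s)"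
      by (auto intro!: derivative_eq_intros)
    have 2: "((\<lambda>s. F (z + s *\<^sub>R i)) has_derivative (\<lambda>h. frechet_derivative F (at ?x) (h *\<^sub>R i))) (at s)"
      using has_derivative_compose[OF 1 partial_works[OF dF]] by simp
    have lin: "linear (frechet_derivative F (at ?x))"
      using partial_works[OF dF] has_derivative_linear by blast
    have "(\<lambda>h. frechet_derivative F (at ?x) (h *\<^sub>R i)) = (\<lambda>h. d ?x * h)"
      using lin by (auto simp: d_def partial_def linear_scale)
    with 2 show ?thesis by (simp add: has_field_derivative_def)
  qed
  have ftc: "((\<lambda>s. d (z + s *\<^sub>R i)) has_integral (F (z + i) - F z)) {0..1}" for z
  proof -
    have "((\<lambda>s. d (z + s *\<^sub>R i)) has_integral (F (z + 1 *\<^sub>R i) - F (z + 0 *\<^sub>R i))) {0..1}"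
      by (rule fundamental_theorem_of_calculus)
         (auto simp: has_real_derivative_iff_has_vector_derivative[symmetric] intro!: has_field_derivative_at_within deriv)
    then show ?thesis by simp
  qed
  have transl: "(\<integral>z. G (z + c) \<partial>lborel) = (\<integral>z. G z \<partial>lborel)"
     "integrable lborel (\<lambda>z. G (z + c)) \<longleftrightarrow> integrable lborel G"
    if "G \<in> borel_measurable borel" for G :: "'a \<Rightarrow> real" and c
    using integral_translate[OF that] by auto
  define H where "H = (\<lambda>(s::real, z::'a). indicator {0..1} s *\<^sub>R d (z + s *\<^sub>R i))"
  have H_meas: "H \<in> borel_measurable (lborel \<Otimes>\<^sub>M lborel)"
    unfolding H_def by measurable
  have H_meas2: "(\<lambda>(z, s). H (s, z)) \<in> borel_measurable (lborel \<Otimes>\<^sub>M lborel)"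
    unfolding H_def by measurable
  have inner_norm: "(\<integral>z. norm (H (s, z)) \<partial>lborel) = indicator {0..1} s * (\<integral>z. norm (d z) \<partial>lborel)" for s
  proof -
    have "(\<integral>z. norm (H (s, z)) \<partial>lborel) = (\<integral>z. indicator {0..1} s * norm (d (z + s *\<^sub>R i)) \<partial>lborel)"
      by (simp add: H_def abs_mult)
    also have "\<dots> = indicator {0..1} s * (\<integral>z. norm (d (z + s *\<^sub>R i)) \<partial>lborel)"
      by simp
    also have "(\<integral>z. norm (d (z + s *\<^sub>R i)) \<partial>lborel) = (\<integral>z. norm (d z) \<partial>lborel)"
      using transl[of "\<lambda>z. norm (d z)"] by simp
    finally show ?thesis .
  qed
  have inner: "(\<integral>z. H (s, z) \<partial>lborel) = indicator {0..1} s * (\<integral>z. d z \<partial>lborel)" for s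
  proof -
    have "(\<integral>z. H (s, z) \<partial>lborel) = (\<integral>z. indicator {0..1} s * d (z + s *\<^sub>R i) \<partial>lborel)"
      by (simp add: H_def)
    also have "\<dots> = indicator {0..1} s * (\<integral>z. d (z + s *\<^sub>R i) \<partial>lborel)"
      by simp
    also have "(\<integral>z. d (z + s *\<^sub>R i) \<partial>lborel) = (\<integral>z. d z \<partial>lborel)"
      using transl[of d] by simp
    finally show ?thesis .
  qed
  have Hint: "integrable (lborel \<Otimes>\<^sub>M lborel) H"
  proof (rule lborel_pair.Fubini_integrable)
    show "H \<in> borel_measurable (lborel \<Otimes>\<^sub>M lborel)" by (rule H_meas)
    show "integrable lborel (\<lambda>s. \<integral>z. norm (H (s, z)) \<partial>lborel)"
      unfolding inner_norm by (intro integrable_mult_left) auto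
    show "AE s in lborel. integrable lborel (\<lambda>z. H (s, z))"
    proof (intro AE_I2)
      fix s
      have "integrable lborel (\<lambda>z. d (z + s *\<^sub>R i))"
        using transl[of d] idF d_def by simp
      then show "integrable lborel (\<lambda>z. H (s, z))"
        by (simp add: H_def)
    qed
  qed
  have Hint': "integrable (lborel \<Otimes>\<^sub>M lborel) (case_prod (\<lambda>s z. H (s, z)))"
    using Hint by simp
  have fub: "(\<integral>z. (\<integral>s. H (s, z) \<partial>lborel) \<partial>lborel) = (\<integral>s. (\<integral>z. H (s, z) \<partial>lborel) \<partial>lborel)"
    using lborel_pair.Fubini_integral[OF Hint'] by simp
  have rhs: "(\<integral>s. (\<integral>z. H (s, z) \<partial>lborel) \<partial>lborel) = (\<integral>z. d z \<partial>lborel)"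
    unfolding inner by simp
  have lhs: "(\<integral>z. (\<integral>s. H (s, z) \<partial>lborel) \<partial>lborel) = (\<integral>z. F (z + i) - F z \<partial>lborel)"
  proof (rule integral_cong_AE)
    show "(\<lambda>z. \<integral>s. H (s, z) \<partial>lborel) \<in> borel_measurable lborel"
      using H_meas2 by measurable
    show "(\<lambda>z. F (z + i) - F z) \<in> borel_measurable lborel" by measurable
    show "AE z in lborel. (\<integral>s. H (s, z) \<partial>lborel) = F (z + i) - F z"
      using lborel_pair.AE_integrable_snd[OF Hint']
    proof eventually_elim
      case (elim z)
      then have si: "set_integrable lborel {0..1} (\<lambda>s. d (z + s *\<^sub>R i))"
        by (simp add: H_def set_integrable_def)
      have "(\<integral>s. H (s, z) \<partial>lborel) = (LINT s:{0..1}|lborel. d (z + s *\<^sub>R i))"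
        by (simp add: H_def set_lebesgue_integral_def)
      also have "\<dots> = integral {0..1} (\<lambda>s. d (z + s *\<^sub>R i))"
        by (rule set_borel_integral_eq_integral(2)[OF si])
      also have "\<dots> = F (z + i) - F z"
        using ftc[of z] by (rule integral_unique)
      finally show ?case .
    qed
  qed
  have iFi: "integrable lborel (\<lambda>z. F (z + i))" using transl(2)[OF F_meas, of i] iF by simp
  have "(\<integral>z. F (z + i) - F z \<partial>lborel) = (\<integral>z. F (z + i) \<partial>lborel) - (\<integral>z. F z \<partial>lborel)"
    by (rule Bochner_Integration.integral_diff[OF iFi iF])
  also have "\<dots> = 0" using transl[of F i] F_meas by simp
  finally show ?thesis using fub rhs lhs by (simp add: d_def)
qed



lemma duis_lemma:
  fixes \<phi> D :: "'a::euclidean_space \<Rightarrow> real \<Rightarrow> real" and h :: "'a \<Rightarrow> real"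
  assumes der: "\<And>t z. t \<in> {0..1} \<Longrightarrow> ((\<lambda>s. \<phi> z s) has_real_derivative D z t) (at t within {0..1})"
    and int: "\<And>t. t \<in> {0..1} \<Longrightarrow> integrable lborel (\<lambda>z. \<phi> z t)"
    and intD: "\<And>t. t \<in> {0..1} \<Longrightarrow> integrable lborel (\<lambda>z. D z t)"
    and hint: "integrable lborel h" and hb: "\<And>t z. t \<in> {0..1} \<Longrightarrow> \<bar>D z t\<bar> \<le> h z"
    and t: "t \<in> {0..1}"
  shows "((\<lambda>s. \<integral>z. \<phi> z s \<partial>lborel) has_real_derivative (\<integral>z. D z t \<partial>lborel)) (at t within {0..1})"
proof -
  have "((\<lambda>s. ((\<integral>z. \<phi> z s \<partial>lborel) - (\<integral>z. \<phi> z t \<partial>lborel)) / (s - t)) \<longlongrightarrow> (\<integral>z. D z t \<partial>lborel)) (at t within {0..1})"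
  proof (rule Lim_within_LIMSEQ, intro allI impI)
    fix S :: "nat \<Rightarrow> real" assume S: "(\<forall>n. S n \<noteq> t \<and> S n \<in> {0..1}) \<and> S \<longlonglongrightarrow> t"
    define Q where "Q n z = (\<phi> z (S n) - \<phi> z t) / (S n - t)" for n z
    have eq: "((\<integral>z. \<phi> z (S n) \<partial>lborel) - (\<integral>z. \<phi> z t \<partial>lborel)) / (S n - t) = (\<integral>z. Q n z \<partial>lborel)" for n
    proof -
      have "(\<integral>z. Q n z \<partial>lborel) = (\<integral>z. \<phi> z (S n) - \<phi> z t \<partial>lborel) / (S n - t)"
        unfolding Q_def by (rule integral_divide_zero)
      also have "(\<integral>z. \<phi> z (S n) - \<phi> z t \<partial>lborel) = (\<integral>z. \<phi> z (S n) \<partial>lborel) - (\<integral>z. \<phi> z t \<partial>lborel)"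
        using S t by (intro Bochner_Integration.integral_diff int) auto
      finally show ?thesis by simp
    qed
    have "(\<lambda>n. \<integral>z. Q n z \<partial>lborel) \<longlonglongrightarrow> (\<integral>z. D z t \<partial>lborel)"
    proof (rule integral_dominated_convergence[where w=h])
      show "(\<lambda>z. D z t) \<in> borel_measurable lborel"
        using intD[OF t] by (rule borel_measurable_integrable)
      show "Q n \<in> borel_measurable lborel" for n
      proof -
        have "(\<lambda>z. \<phi> z (S n)) \<in> borel_measurable lborel" "(\<lambda>z. \<phi> z t) \<in> borel_measurable lborel"
          using int S t by (auto intro: borel_measurable_integrable)
        then show ?thesis unfolding Q_def[abs_def] by measurable
      qed
      show "integrable lborel h" by (rule hint)
      show "AE z in lborel. (\<lambda>n. Q n z) \<longlonglongrightarrow> D z t"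
      proof (rule AE_I2)
        fix z
        have lim: "((\<lambda>y. (\<phi> z y - \<phi> z t) / (y - t)) \<longlongrightarrow> D z t) (at t within {0..1})"
          using der[OF t, of z] by (simp add: has_field_derivative_iff)
        have fS: "filterlim S (at t within {0..1}) sequentially"
          using S by (auto simp: filterlim_at)
        show "(\<lambda>n. Q n z) \<longlonglongrightarrow> D z t"
          unfolding Q_def using filterlim_compose[OF lim fS] by simp
      qed
      show "AE z in lborel. norm (Q n z) \<le> h z" for n
      proof (rule AE_I2)
        fix z
        define a where "a = min t (S n)"
        define b where "b = max t (S n)"
        have ab: "a \<le> b" "{a..b} \<subseteq> {0..1}" using S t by (auto simp: a_def b_def)
        have "\<exists>x\<in>{a..b}. \<phi> z b - \<phi> z a = (\<lambda>h. D z x * h) (b - a)"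
        proof (rule mvt_very_simple[OF ab(1)])
          fix x assume "a \<le> x" "x \<le> b"
          then have "x \<in> {0..1}" using ab by auto
          from der[OF this, of z] have "((\<lambda>s. \<phi> z s) has_derivative (\<lambda>h. D z x * h)) (at x within {0..1})"
            by (simp add: has_field_derivative_def)
          then show "((\<phi> z) has_derivative (\<lambda>h. D z x * h)) (at x within {a..b})"
            using ab(2) by (auto intro: has_derivative_subset)
        qed
        then obtain x where x: "x \<in> {a..b}" "\<phi> z b - \<phi> z a = D z x * (b - a)" by auto
        have "Q n z = D z x"
        proof (cases "S n < t")
          case True
          then have "a = S n" "b = t" by (auto simp: a_def b_def)
          with x True show ?thesis by (simp add: Q_def field_simps)
        next
          case False
          then have "a = t" "b = S n" by (auto simp: a_def b_def)
          moreover have "S n \<noteq> t" using S by auto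
          ultimately show ?thesis using x False by (simp add: Q_def field_simps)
        qed
        moreover have "x \<in> {0..1}" using x ab by auto
        ultimately show "norm (Q n z) \<le> h z" using hb by simp
      qed
    qed
    then show "(\<lambda>n. ((\<integral>z. \<phi> z (S n) \<partial>lborel) - (\<integral>z. \<phi> z t \<partial>lborel)) / (S n - t)) \<longlonglongrightarrow> (\<integral>z. D z t \<partial>lborel)"
      using eq by simp
  qed
  then show ?thesis by (simp add: has_field_derivative_iff)
qed



lemma key:
  fixes f :: "'a::euclidean_space \<Rightarrow> real \<Rightarrow> 'a" and g :: "real \<Rightarrow> real"
    and q p :: "'a \<Rightarrow> real \<Rightarrow> real" and t :: real
  assumes fd: "\<And>z. (\<lambda>y. f y t) differentiable (at z)"
    and qpos: "\<And>z. q z t > 0" and ppos: "\<And>z. p z t > 0"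
    and qd: "\<And>z. (\<lambda>y. q y t) differentiable (at z)"
    and qgd: "\<And>z. (\<lambda>y. grad (\<lambda>x. ln (q x t)) y) differentiable (at z)"
    and pd: "\<And>z. (\<lambda>y. p y t) differentiable (at z)"
    and pgd: "\<And>z. (\<lambda>y. grad (\<lambda>x. ln (p x t)) y) differentiable (at z)"
    and ibp1: "\<And>i. i\<in>Basis \<Longrightarrow>
                 integrable lborel (\<lambda>z. ln (p z t) * (fp_flux g f q z t \<bullet> i))
               \<and> integrable lborel (partial (\<lambda>z. ln (p z t) * (fp_flux g f q z t \<bullet> i)) i)
               \<and> integrable lborel (\<lambda>z. (fp_flux g f q z t \<bullet> i) * partial (\<lambda>y. ln (p y t)) i z)"
    and ibp2: "\<And>i. i\<in>Basis \<Longrightarrow>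
                 integrable lborel (\<lambda>z. q z t / p z t * (fp_flux g f p z t \<bullet> i))
               \<and> integrable lborel (partial (\<lambda>z. q z t / p z t * (fp_flux g f p z t \<bullet> i)) i)
               \<and> integrable lborel (\<lambda>z. partial (\<lambda>y. q y t / p y t) i z * (fp_flux g f p z t \<bullet> i))"
  shows "integrable lborel (\<lambda>z. divg (\<lambda>y. fp_flux g f q y t) z * ln (p z t)
                   + q z t * divg (\<lambda>y. fp_flux g f p y t) z / p z t)"
    and "(\<integral>z. divg (\<lambda>y. fp_flux g f q y t) z * ln (p z t)
                   + q z t * divg (\<lambda>y. fp_flux g f p y t) z / p z t \<partial>lborel)
         = expect_dens (\<lambda>z. q z t) (\<lambda>z.
                   (g t)^2 / 2 * (norm (grad (\<lambda>y. ln (p y t)) z))^2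
                 + f z t \<bullet> grad (\<lambda>y. ln (q y t)) z
                 - (g t)^2 * (grad (\<lambda>y. ln (q y t)) z \<bullet> grad (\<lambda>y. ln (p y t)) z))"
proof -
  define Jq where "Jq = (\<lambda>z. fp_flux g f q z t)"
  define Jp where "Jp = (\<lambda>z. fp_flux g f p z t)"
  define P where "P i = partial (\<lambda>z. ln (p z t) * (Jq z \<bullet> i)) i" for i
  define Q where "Q i = partial (\<lambda>z. q z t / p z t * (Jp z \<bullet> i)) i" for i
  define R where "R i z = (Jq z \<bullet> i) * partial (\<lambda>y. ln (p y t)) i z" for i z
  define S where "S i z = partial (\<lambda>y. q y t / p y t) i z * (Jp z \<bullet> i)" for i z
  have dLp: "(\<lambda>y. ln (p y t)) differentiable (at z)" for z
    using has_derivative_ln[OF ppos partial_works[OF pd]] unfolding differentiable_def by blast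
  have dJq: "(\<lambda>y. Jq y \<bullet> i) differentiable (at z)" for z i
    unfolding Jq_def fp_flux_def using qd qgd fd by simp
  have dJp: "(\<lambda>y. Jp y \<bullet> i) differentiable (at z)" for z i
    unfolding Jp_def fp_flux_def using pd pgd fd by simp
  have dqp: "(\<lambda>y. q y t / p y t) differentiable (at z)" for z
    using qd pd ppos[of z] by (intro differentiable_divide) auto
  have dPF: "(\<lambda>y. ln (p y t) * (Jq y \<bullet> i)) differentiable (at z)" for z i
    by (rule differentiable_mult[OF dLp dJq])
  have dQF: "(\<lambda>y. q y t / p y t * (Jp y \<bullet> i)) differentiable (at z)" for z i
    by (rule differentiable_mult[OF dqp dJp])
  have Pexp: "P i z = R i z + ln (p z t) * partial (\<lambda>y. Jq y \<bullet> i) i z" for i z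
    unfolding P_def R_def using partial_mult[OF dLp[of z] dJq[of i z], of i] by (simp add: mult.commute)
  have Qexp: "Q i z = S i z + q z t / p z t * partial (\<lambda>y. Jp y \<bullet> i) i z" for i z
    unfolding Q_def S_def using partial_mult[OF dqp[of z] dJp[of i z], of i] by (simp add: mult.commute)
  have intP: "integrable lborel (P i)" and intQ: "integrable lborel (Q i)"
    and intR: "integrable lborel (R i)" and intS: "integrable lborel (S i)"
    and intPF: "integrable lborel (\<lambda>z. ln (p z t) * (Jq z \<bullet> i))"
    and intQF: "integrable lborel (\<lambda>z. q z t / p z t * (Jp z \<bullet> i))"
    if "i \<in> Basis" for i
    using ibp1[OF that] ibp2[OF that]
    by (simp_all add: P_def Q_def R_def[abs_def] S_def[abs_def] Jq_def Jp_def)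
  have P0: "(\<integral>z. P i z \<partial>lborel) = 0" if "i \<in> Basis" for i
    unfolding P_def by (rule ibp_zero[OF dPF intPF[OF that]]) (use intP[OF that] P_def in simp)
  have Q0: "(\<integral>z. Q i z \<partial>lborel) = 0" if "i \<in> Basis" for i
    unfolding Q_def by (rule ibp_zero[OF dQF intQF[OF that]]) (use intQ[OF that] Q_def in simp)
  have Dsum: "divg (\<lambda>y. fp_flux g f q y t) z * ln (p z t) + q z t * divg (\<lambda>y. fp_flux g f p y t) z / p z t
      = (\<Sum>i\<in>Basis. P i z + Q i z - R i z - S i z)" for z
  proof -
    have "(\<Sum>i\<in>Basis. P i z + Q i z - R i z - S i z)
        = (\<Sum>i\<in>Basis. ln (p z t) * partial (\<lambda>y. Jq y \<bullet> i) i z + q z t / p z t * partial (\<lambda>y. Jp y \<bullet> i) i z)"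
      by (rule sum.cong) (auto simp: Pexp Qexp)
    also have "\<dots> = divg Jq z * ln (p z t) + q z t * divg Jp z / p z t"
      by (simp add: divg_def sum.distrib sum_distrib_left sum_distrib_right sum_divide_distrib mult.commute)
    finally show ?thesis by (simp add: Jq_def Jp_def)
  qed
  have Esum: "q z t * ((g t)^2 / 2 * (norm (grad (\<lambda>y. ln (p y t)) z))^2
                 + f z t \<bullet> grad (\<lambda>y. ln (q y t)) z
                 - (g t)^2 * (grad (\<lambda>y. ln (q y t)) z \<bullet> grad (\<lambda>y. ln (p y t)) z))
      = (\<Sum>i\<in>Basis. - R i z - S i z)" for z
  proof -
    define a where "a i = partial (\<lambda>y. q y t) i z" for i
    define b where "b i = partial (\<lambda>y. p y t) i z" for i
    have q0: "q z t > 0" and p0: "p z t > 0" using qpos ppos by auto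
    have Lq: "grad (\<lambda>y. ln (q y t)) z \<bullet> i = a i / q z t" if "i \<in> Basis" for i
      using grad_inner[OF that] partial_ln[OF qd q0] by (simp add: a_def)
    have Lp: "grad (\<lambda>y. ln (p y t)) z \<bullet> i = b i / p z t" if "i \<in> Basis" for i
      using grad_inner[OF that] partial_ln[OF pd p0] by (simp add: b_def)
    have Lp': "partial (\<lambda>y. ln (p y t)) i z = b i / p z t" for i
      using partial_ln[OF pd p0] by (simp add: b_def)
    have QP: "partial (\<lambda>y. q y t / p y t) i z = (a i * p z t - q z t * b i) / (p z t)^2" for i
      using partial_div[OF qd pd, of z i] p0 by (simp add: a_def b_def)
    have Jqi: "Jq z \<bullet> i = q z t * ((g t)^2 / 2 * (a i / q z t) - f z t \<bullet> i)" if "i \<in> Basis" for i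
      using Lq[OF that] by (simp add: Jq_def fp_flux_def inner_diff_left)
    have Jpi: "Jp z \<bullet> i = p z t * ((g t)^2 / 2 * (b i / p z t) - f z t \<bullet> i)" if "i \<in> Basis" for i
      using Lp[OF that] by (simp add: Jp_def fp_flux_def inner_diff_left)
    have n2: "(norm (grad (\<lambda>y. ln (p y t)) z))^2 = (\<Sum>i\<in>Basis. (b i / p z t)^2)"
    proof -
      have "(norm (grad (\<lambda>y. ln (p y t)) z))^2 = grad (\<lambda>y. ln (p y t)) z \<bullet> grad (\<lambda>y. ln (p y t)) z"
        by (simp add: power2_norm_eq_inner)
      also have "\<dots> = (\<Sum>i\<in>Basis. (grad (\<lambda>y. ln (p y t)) z \<bullet> i) * (grad (\<lambda>y. ln (p y t)) z \<bullet> i))"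
        by (rule euclidean_inner)
      also have "\<dots> = (\<Sum>i\<in>Basis. (b i / p z t)^2)"
        by (rule sum.cong) (auto simp: Lp power2_eq_square)
      finally show ?thesis .
    qed
    have i1: "f z t \<bullet> grad (\<lambda>y. ln (q y t)) z = (\<Sum>i\<in>Basis. (f z t \<bullet> i) * (a i / q z t))"
      by (subst euclidean_inner) (rule sum.cong, auto simp: Lq)
    have i2: "grad (\<lambda>y. ln (q y t)) z \<bullet> grad (\<lambda>y. ln (p y t)) z = (\<Sum>i\<in>Basis. (a i / q z t) * (b i / p z t))"
      by (subst euclidean_inner) (rule sum.cong, auto simp: Lq Lp)
    have "q z t * ((g t)^2 / 2 * (norm (grad (\<lambda>y. ln (p y t)) z))^2
                 + f z t \<bullet> grad (\<lambda>y. ln (q y t)) z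
                 - (g t)^2 * (grad (\<lambda>y. ln (q y t)) z \<bullet> grad (\<lambda>y. ln (p y t)) z))
       = (\<Sum>i\<in>Basis. q z t * ((g t)^2 / 2 * (b i / p z t)^2 + (f z t \<bullet> i) * (a i / q z t)
                 - (g t)^2 * ((a i / q z t) * (b i / p z t))))"
      unfolding n2 i1 i2
      by (simp add: sum_distrib_left sum.distrib sum_subtractf algebra_simps)
    also have "\<dots> = (\<Sum>i\<in>Basis. - R i z - S i z)"
    proof (rule sum.cong[OF refl])
      fix i :: 'a assume i: "i \<in> Basis"
      show "q z t * ((g t)^2 / 2 * (b i / p z t)^2 + (f z t \<bullet> i) * (a i / q z t)
                 - (g t)^2 * ((a i / q z t) * (b i / p z t))) = - R i z - S i z"
        unfolding R_def S_def Jqi[OF i] Jpi[OF i] Lp' QP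
        using q0 p0 by (simp add: field_simps power2_eq_square)
    qed
    finally show ?thesis .
  qed
  have intD: "integrable lborel (\<lambda>z. \<Sum>i\<in>Basis. P i z + Q i z - R i z - S i z)"
    by (intro Bochner_Integration.integrable_sum Bochner_Integration.integrable_diff Bochner_Integration.integrable_add intP intQ intR intS) auto
  then show "integrable lborel (\<lambda>z. divg (\<lambda>y. fp_flux g f q y t) z * ln (p z t)
                   + q z t * divg (\<lambda>y. fp_flux g f p y t) z / p z t)"
    by (simp add: Dsum)
  have "(\<integral>z. divg (\<lambda>y. fp_flux g f q y t) z * ln (p z t)
                   + q z t * divg (\<lambda>y. fp_flux g f p y t) z / p z t \<partial>lborel)
      = (\<integral>z. (\<Sum>i\<in>Basis. P i z + Q i z - R i z - S i z) \<partial>lborel)"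
    by (simp add: Dsum)
  also have "\<dots> = (\<Sum>i\<in>Basis. (\<integral>z. P i z + Q i z - R i z - S i z \<partial>lborel))"
    by (intro Bochner_Integration.integral_sum Bochner_Integration.integrable_diff Bochner_Integration.integrable_add intP intQ intR intS) auto
  also have "\<dots> = (\<Sum>i\<in>Basis. (\<integral>z. - R i z - S i z \<partial>lborel))"
  proof (rule sum.cong[OF refl])
    fix i :: 'a assume i: "i \<in> Basis"
    have "(\<integral>z. P i z + Q i z - R i z - S i z \<partial>lborel)
        = (\<integral>z. P i z \<partial>lborel) + (\<integral>z. Q i z \<partial>lborel) - (\<integral>z. R i z \<partial>lborel) - (\<integral>z. S i z \<partial>lborel)"
      using intP[OF i] intQ[OF i] intR[OF i] intS[OF i]
      by (simp add: Bochner_Integration.integral_diff Bochner_Integration.integral_add)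
    also have "\<dots> = (\<integral>z. - R i z - S i z \<partial>lborel)"
      using intR[OF i] intS[OF i] P0[OF i] Q0[OF i]
      by (simp add: Bochner_Integration.integral_diff)
    finally show "(\<integral>z. P i z + Q i z - R i z - S i z \<partial>lborel) = (\<integral>z. - R i z - S i z \<partial>lborel)" .
  qed
  also have "\<dots> = (\<integral>z. (\<Sum>i\<in>Basis. - R i z - S i z) \<partial>lborel)"
    by (intro Bochner_Integration.integral_sum[symmetric] Bochner_Integration.integrable_diff integrable_minus intR intS) auto
  also have "\<dots> = expect_dens (\<lambda>z. q z t) (\<lambda>z.
                   (g t)^2 / 2 * (norm (grad (\<lambda>y. ln (p y t)) z))^2
                 + f z t \<bullet> grad (\<lambda>y. ln (q y t)) z
                 - (g t)^2 * (grad (\<lambda>y. ln (q y t)) z \<bullet> grad (\<lambda>y. ln (p y t)) z))"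
    unfolding expect_dens_def Esum ..
  finally show "(\<integral>z. divg (\<lambda>y. fp_flux g f q y t) z * ln (p z t)
                   + q z t * divg (\<lambda>y. fp_flux g f p y t) z / p z t \<partial>lborel)
         = expect_dens (\<lambda>z. q z t) (\<lambda>z.
                   (g t)^2 / 2 * (norm (grad (\<lambda>y. ln (p y t)) z))^2
                 + f z t \<bullet> grad (\<lambda>y. ln (q y t)) z
                 - (g t)^2 * (grad (\<lambda>y. ln (q y t)) z \<bullet> grad (\<lambda>y. ln (p y t)) z))" .
qed


theorem mainTheorem2:
  fixes f :: "'a::euclidean_space \<Rightarrow> real \<Rightarrow> 'a" and g :: "real \<Rightarrow> real"
    and q p :: "'a \<Rightarrow> real \<Rightarrow> real"
  assumes f_reg: "\<forall>t\<in>{0..1}. \<forall>z. (\<lambda>y. f y t) differentiable (at z)"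
    and g_reg: "continuous_on {0..1} g"
    and q_pos: "\<forall>t\<in>{0..1}. \<forall>z. q z t > 0"
    and p_pos: "\<forall>t\<in>{0..1}. \<forall>z. p z t > 0"
    and q_dens: "\<forall>t\<in>{0..1}. integrable lborel (\<lambda>z. q z t) \<and> (\<integral>z. q z t \<partial>lborel) = 1"
    and p_dens: "\<forall>t\<in>{0..1}. integrable lborel (\<lambda>z. p z t) \<and> (\<integral>z. p z t \<partial>lborel) = 1"
    and q_reg: "\<forall>t\<in>{0..1}. \<forall>z. (\<lambda>y. q y t) differentiable (at z)
                  \<and> (\<lambda>y. grad (\<lambda>x. ln (q x t)) y) differentiable (at z)"
    and p_reg: "\<forall>t\<in>{0..1}. \<forall>z. (\<lambda>y. p y t) differentiable (at z)
                  \<and> (\<lambda>y. grad (\<lambda>x. ln (p x t)) y) differentiable (at z)"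
    and q_FP: "\<forall>t\<in>{0..1}. \<forall>z.
                 ((\<lambda>s. q z s) has_real_derivative divg (\<lambda>y. fp_flux g f q y t) z) (at t within {0..1})"
    and p_FP: "\<forall>t\<in>{0..1}. \<forall>z.
                 ((\<lambda>s. p z s) has_real_derivative divg (\<lambda>y. fp_flux g f p y t) z) (at t within {0..1})"
    and terminal: "\<forall>z. q z 1 = p z 1"
    \<comment> \<open>decay: the cross-entropy integrals exist\<close>
    and cross_int: "\<forall>t\<in>{0..1}. integrable lborel (\<lambda>z. q z t * ln (p z t))"
    \<comment> \<open>decay for differentiation under the integral sign in t (integrable dominating function)\<close>
    and duis: "\<exists>h. integrable lborel h \<and> (\<forall>t\<in>{0..1}. \<forall>z.
                 \<bar>divg (\<lambda>y. fp_flux g f q y t) z * ln (p z t)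
                   + q z t * divg (\<lambda>y. fp_flux g f p y t) z / p z t\<bar> \<le> h z)"
    \<comment> \<open>decay for integration by parts with vanishing boundary terms\<close>
    and ibp1: "\<forall>t\<in>{0..1}. \<forall>i\<in>Basis.
                 integrable lborel (\<lambda>z. ln (p z t) * (fp_flux g f q z t \<bullet> i))
               \<and> integrable lborel (partial (\<lambda>z. ln (p z t) * (fp_flux g f q z t \<bullet> i)) i)
               \<and> integrable lborel (\<lambda>z. (fp_flux g f q z t \<bullet> i) * partial (\<lambda>y. ln (p y t)) i z)"
    and ibp2: "\<forall>t\<in>{0..1}. \<forall>i\<in>Basis.
                 integrable lborel (\<lambda>z. q z t / p z t * (fp_flux g f p z t \<bullet> i))
               \<and> integrable lborel (partial (\<lambda>z. q z t / p z t * (fp_flux g f p z t \<bullet> i)) i)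
               \<and> integrable lborel (\<lambda>z. partial (\<lambda>y. q y t / p y t) i z * (fp_flux g f p z t \<bullet> i))"
  shows "- (\<integral>z. q z 0 * ln (p z 0) \<partial>lborel)
           = diff_entropy (\<lambda>z. q z 1)
             + integral {0..1} (\<lambda>t. expect_dens (\<lambda>z. q z t) (\<lambda>z.
                   (g t)^2 / 2 * (norm (grad (\<lambda>y. ln (p y t)) z))^2
                 + f z t \<bullet> grad (\<lambda>y. ln (q y t)) z
                 - (g t)^2 * (grad (\<lambda>y. ln (q y t)) z \<bullet> grad (\<lambda>y. ln (p y t)) z)))"
proof -
  define D where "D z t = divg (\<lambda>y. fp_flux g f q y t) z * ln (p z t) + q z t * divg (\<lambda>y. fp_flux g f p y t) z / p z t" for z t
  define E where "E t = expect_dens (\<lambda>z. q z t) (\<lambda>z.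
                   (g t)^2 / 2 * (norm (grad (\<lambda>y. ln (p y t)) z))^2
                 + f z t \<bullet> grad (\<lambda>y. ln (q y t)) z
                 - (g t)^2 * (grad (\<lambda>y. ln (q y t)) z \<bullet> grad (\<lambda>y. ln (p y t)) z))" for t
  define F where "F s = (\<integral>z. q z s * ln (p z s) \<partial>lborel)" for s
  have keyt: "integrable lborel (\<lambda>z. D z t) \<and> (\<integral>z. D z t \<partial>lborel) = E t" if t: "t \<in> {0..1}" for t
  proof -
    have A: "\<And>z. (\<lambda>y. f y t) differentiable (at z)" using f_reg t by auto
    have B: "\<And>z. q z t > 0" "\<And>z. p z t > 0" using q_pos p_pos t by auto
    have C: "\<And>z. (\<lambda>y. q y t) differentiable (at z)" "\<And>z. (\<lambda>y. grad (\<lambda>x. ln (q x t)) y) differentiable (at z)"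
      using q_reg t by auto
    have C': "\<And>z. (\<lambda>y. p y t) differentiable (at z)" "\<And>z. (\<lambda>y. grad (\<lambda>x. ln (p x t)) y) differentiable (at z)"
      using p_reg t by auto
    have I1: "\<And>i. i\<in>Basis \<Longrightarrow>
                 integrable lborel (\<lambda>z. ln (p z t) * (fp_flux g f q z t \<bullet> i))
               \<and> integrable lborel (partial (\<lambda>z. ln (p z t) * (fp_flux g f q z t \<bullet> i)) i)
               \<and> integrable lborel (\<lambda>z. (fp_flux g f q z t \<bullet> i) * partial (\<lambda>y. ln (p y t)) i z)"
      using ibp1 t by auto
    have I2: "\<And>i. i\<in>Basis \<Longrightarrow>
                 integrable lborel (\<lambda>z. q z t / p z t * (fp_flux g f p z t \<bullet> i))
               \<and> integrable lborel (partial (\<lambda>z. q z t / p z t * (fp_flux g f p z t \<bullet> i)) i)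
               \<and> integrable lborel (\<lambda>z. partial (\<lambda>y. q y t / p y t) i z * (fp_flux g f p z t \<bullet> i))"
      using ibp2 t by auto
    show ?thesis
      using key[OF A B C C' I1 I2] by (simp add: D_def[abs_def] E_def)
  qed
  have der: "((\<lambda>s. q z s * ln (p z s)) has_real_derivative D z t) (at t within {0..1})"
    if t: "t \<in> {0..1}" for t z
  proof -
    have hq: "((\<lambda>s. q z s) has_real_derivative divg (\<lambda>y. fp_flux g f q y t) z) (at t within {0..1})"
      using q_FP t by auto
    have hp: "((\<lambda>s. p z s) has_real_derivative divg (\<lambda>y. fp_flux g f p y t) z) (at t within {0..1})"
      using p_FP t by auto
    have hl: "((\<lambda>s. ln (p z s)) has_real_derivative 1 / p z t * divg (\<lambda>y. fp_flux g f p y t) z) (at t within {0..1})"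
      by (rule DERIV_chain2[OF DERIV_ln_divide hp]) (use p_pos t in auto)
    from DERIV_mult[OF hq hl] show ?thesis
      by (rule DERIV_cong) (simp add: D_def)
  qed
  obtain h where h: "integrable lborel h" "\<And>t z. t \<in> {0..1} \<Longrightarrow> \<bar>D z t\<bar> \<le> h z"
    using duis unfolding D_def by blast
  have Fder: "(F has_real_derivative (\<integral>z. D z t \<partial>lborel)) (at t within {0..1})"
    if t: "t \<in> {0..1}" for t
    unfolding F_def
  proof (rule duis_lemma[where D=D and h=h, OF der _ _ h t])
    show "\<And>t. t \<in> {0..1} \<Longrightarrow> integrable lborel (\<lambda>z. q z t * ln (p z t))" using cross_int by auto
    show "\<And>t. t \<in> {0..1} \<Longrightarrow> integrable lborel (\<lambda>z. D z t)" using keyt by auto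
  qed auto
  have "((\<lambda>t. \<integral>z. D z t \<partial>lborel) has_integral (F 1 - F 0)) {0..1}"
    by (rule fundamental_theorem_of_calculus)
       (auto simp: has_real_derivative_iff_has_vector_derivative[symmetric] intro!: Fder)
  then have "(E has_integral (F 1 - F 0)) {0..1}"
    by (rule has_integral_eq[rotated]) (use keyt in auto)
  then have int: "integral {0..1} E = F 1 - F 0"
    by (rule integral_unique)
  have ent: "diff_entropy (\<lambda>z. q z 1) = - F 1"
    using terminal by (simp add: diff_entropy_def F_def)
  have F0: "F 0 = (\<integral>z. q z 0 * ln (p z 0) \<partial>lborel)" by (simp add: F_def)
  show ?thesis
    using int ent F0 unfolding E_def[abs_def] by simp
qed

end
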